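(* Let $K$ satisfy $m:=\binom K2\ge8$, and let $\Omega=\{0,1\}^{\binom{[K]}{2}}$ (vectors indexed by 2-element subsets of $[K]$) with Hamming distance $d_H$. For a permutation $\sigma$ of $[K]$ and $\omega\in\Omega$ define $T_\sigma(\omega)\in\Omega$ by $T_\sigma(\omega)_{\{k,k'\}}=\omega_{\{\sigma(k),\sigma(k')\}}$. Then there exists $\Omega''\subseteq\Omega$ such that $\mathbf 0\in\Omega''$, for all distinct $\omega_1,\omega_2\in\Omega''$ $$\min_{\sigma}d_H(T_\sigma(\omega_1),\omega_2)\ge\frac{1}{17}\binom K2,$$ the minimum being over all permutations of $[K]$, and $|\Omega''|\ge1+2^{\frac18\binom K2}/K!$.
   Context: $d_H(\omega,\omega')$ is the number of coordinates in which $\omega$ and $\omega'$ differ. (For the matrix $\mathtt B(\omega)$ with $\mathtt B_{kk}=1/2$, $\mathtt B_{kk'}=1/4+\omega_{\{k,k'\}}\mu/n$, the map $T_\sigma$ corresponds to conjugation $\mathtt B(\omega)\mapsto\Pi\mathtt B(\omega)\Pi^{\mathrm T}$ by a permutation matrix.) *)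

theory Defs
  imports Complex_Main "HOL-Combinatorics.Permutations"
begin

definition pairs :: "nat \<Rightarrow> nat set set" where
  "pairs K = {e. e \<subseteq> {1..K} \<and> card e = 2}"

definition Omega :: "nat \<Rightarrow> (nat set \<Rightarrow> nat) set" where
  "Omega K = {w. (\<forall>e\<in>pairs K. w e \<in> {0,1}) \<and> (\<forall>e. e \<notin> pairs K \<longrightarrow> w e = 0)}"

definition zeroVec :: "nat set \<Rightarrow> nat" where
  "zeroVec = (\<lambda>e. 0)"

definition dH :: "nat \<Rightarrow> (nat set \<Rightarrow> nat) \<Rightarrow> (nat set \<Rightarrow> nat) \<Rightarrow> nat" where
  "dH K w w' = card {e \<in> pairs K. w e \<noteq> w' e}"

definition Tperm :: "nat \<Rightarrow> (nat \<Rightarrow> nat) \<Rightarrow> (nat set \<Rightarrow> nat) \<Rightarrow> (nat set \<Rightarrow> nat)" where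
  "Tperm K \<sigma> w = (\<lambda>e. if e \<in> pairs K then w (\<sigma> ` e) else 0)"

end

theory Submission imports Defs begin

lemma greedy:
  fixes U :: "'a set" and R :: "'a \<Rightarrow> 'a \<Rightarrow> bool" and B :: real
  assumes fin: "finite U" and x0: "x0 \<in> U"
    and nb: "\<And>x. x \<in> U \<Longrightarrow> real (card {y\<in>U. y \<noteq> x \<and> (R x y \<or> R y x)}) \<le> B"
  shows "\<exists>S\<subseteq>U. x0 \<in> S \<and> (\<forall>a\<in>S. \<forall>b\<in>S. a \<noteq> b \<longrightarrow> \<not> R a b) \<and> real (card U) \<le> real (card S) * (B + 1)"
proof -
  let ?P = "\<lambda>S. S \<subseteq> U \<and> x0 \<in> S \<and> (\<forall>a\<in>S. \<forall>b\<in>S. a \<noteq> b \<longrightarrow> \<not> R a b)"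
  have P0: "?P {x0}" using x0 by auto
  have bd: "\<forall>S. ?P S \<longrightarrow> card S < card U + 1"
    using fin by (auto simp: less_Suc_eq_le card_mono)
  obtain S where PS: "?P S" and mx: "\<And>T. ?P T \<Longrightarrow> card T \<le> card S"
    using ex_has_greatest_nat[OF P0 bd] by blast
  define N where "N x = {y\<in>U. y \<noteq> x \<and> (R x y \<or> R y x)}" for x
  have finS: "finite S" using PS fin finite_subset by blast
  have cov: "U \<subseteq> S \<union> (\<Union>s\<in>S. N s)"
  proof
    fix y assume y: "y \<in> U"
    show "y \<in> S \<union> (\<Union>s\<in>S. N s)"
    proof (rule ccontr)
      assume nn: "y \<notin> S \<union> (\<Union>s\<in>S. N s)"
      have "?P (insert y S)" using PS nn y unfolding N_def by auto
      then have "card (insert y S) \<le> card S" by (rule mx)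
      moreover have "card (insert y S) = Suc (card S)" using finS nn by simp
      ultimately show False by simp
    qed
  qed
  have "card U \<le> card (S \<union> (\<Union>s\<in>S. N s))"
    using cov fin finS by (intro card_mono) (auto simp: N_def)
  also have "\<dots> \<le> card S + card (\<Union>s\<in>S. N s)" by (rule card_Un_le)
  also have "card (\<Union>s\<in>S. N s) \<le> (\<Sum>s\<in>S. card (N s))" by (rule card_UN_le[OF finS])
  finally have "real (card U) \<le> real (card S) + (\<Sum>s\<in>S. real (card (N s)))"
    by (metis of_nat_add of_nat_le_iff of_nat_sum add_le_mono le_refl order_trans)
  also have "(\<Sum>s\<in>S. real (card (N s))) \<le> (\<Sum>s\<in>S. B)"
    by (rule sum_mono) (use PS nb in \<open>auto simp: N_def\<close>)
  finally have "real (card U) \<le> real (card S) * (B + 1)" by (simp add: algebra_simps)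
  then show ?thesis using PS by blast
qed


lemma finite_pairs: "finite (pairs K)"
  unfolding pairs_def by (rule finite_subset[of _ "Pow {1..K}"]) auto

lemma card_pairs: "card (pairs K) = K choose 2"
  unfolding pairs_def using n_subsets[of "{1..K}" 2] by simp

lemma perm_pairs: assumes "\<sigma> permutes {1..K}" "e \<in> pairs K" shows "\<sigma> ` e \<in> pairs K"
proof -
  have "inj_on \<sigma> e" using permutes_inj[OF assms(1)] by (auto intro: inj_on_subset)
  then show ?thesis using assms permutes_image[OF assms(1)] unfolding pairs_def
    by (auto simp: card_image dest: permutes_in_image[OF assms(1), THEN iffD2])
qed

lemma Tperm_Omega: assumes "\<sigma> permutes {1..K}" "w \<in> Omega K" shows "Tperm K \<sigma> w \<in> Omega K"
  using assms perm_pairs[OF assms(1)] unfolding Omega_def Tperm_def by auto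

lemma Tperm_inj: assumes "\<sigma> permutes {1..K}" shows "inj_on (Tperm K \<sigma>) (Omega K)"
proof (rule inj_onI)
  fix y1 y2 assume y: "y1 \<in> Omega K" "y2 \<in> Omega K" and eq: "Tperm K \<sigma> y1 = Tperm K \<sigma> y2"
  show "y1 = y2"
  proof
    fix e
    show "y1 e = y2 e"
    proof (cases "e \<in> pairs K")
      case False then show ?thesis using y unfolding Omega_def by auto
    next
      case True
      have ip: "inv \<sigma> permutes {1..K}" using permutes_inv[OF assms] .
      let ?e = "inv \<sigma> ` e"
      have e': "?e \<in> pairs K" using perm_pairs[OF ip True] .
      have ee: "\<sigma> ` ?e = e" using permutes_inverses(1)[OF assms] by (auto simp: image_iff)
      have "Tperm K \<sigma> y1 ?e = Tperm K \<sigma> y2 ?e" using eq by simp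
      then show ?thesis using e' ee unfolding Tperm_def by simp
    qed
  qed
qed

lemma finite_Omega: "finite (Omega K)"
proof -
  have "Omega K \<subseteq> (\<lambda>D e. if e \<in> D then 1 else 0) ` Pow (pairs K)"
  proof
    fix w assume w: "w \<in> Omega K"
    have "w = (\<lambda>e. if e \<in> {e\<in>pairs K. w e = 1} then 1 else 0)"
      using w unfolding Omega_def by (force)
    then show "w \<in> (\<lambda>D e. if e \<in> D then 1 else 0) ` Pow (pairs K)" by blast
  qed
  then show ?thesis using finite_pairs by (meson finite_Pow_iff finite_imageI finite_subset)
qed

lemma card_Omega: "card (Omega K) \<ge> 2 ^ (K choose 2)"
proof -
  let ?f = "\<lambda>D e. if e \<in> D then 1 else (0::nat)"
  have inj: "inj_on ?f (Pow (pairs K))"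
  proof (rule inj_onI)
    fix A B assume "?f A = ?f B"
    then have "\<And>e. (e \<in> A) = (e \<in> B)" by (metis zero_neq_one)
    then show "A = B" by blast
  qed
  have "?f ` Pow (pairs K) \<subseteq> Omega K" unfolding Omega_def by auto
  then have "card (Pow (pairs K)) \<le> card (Omega K)"
    using card_inj_on_le[OF inj _ finite_Omega] by blast
  then show ?thesis using card_Pow[OF finite_pairs] card_pairs by simp
qed

lemma dH_sym: "dH K w w' = dH K w' w"
  unfolding dH_def by (metis (full_types))

lemma sum_pow_card: fixes x :: real assumes "finite A"
  shows "(\<Sum>X\<in>Pow A. x ^ card X) = (1 + x) ^ card A"
proof -
  have "(\<Prod>a\<in>A. x + 1) = (\<Sum>X\<in>Pow A. (\<Prod>a\<in>X. x) * (\<Prod>a\<in>A-X. 1))"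
    by (rule prod_add[OF assms])
  then show ?thesis by (simp add: add.commute)
qed


lemma ball_bound:
  assumes z: "z \<in> Omega K"
  shows "real (card {y\<in>Omega K. real (dH K z y) < t}) \<le> (17/16) ^ (K choose 2) * 16 powr t"
proof -
  let ?Y = "{y\<in>Omega K. real (dH K z y) < t}"
  let ?g = "\<lambda>y. {e\<in>pairs K. z e \<noteq> y e}"
  let ?D = "{D\<in>Pow (pairs K). real (card D) < t}"
  have inj: "inj_on ?g ?Y"
  proof (rule inj_onI)
    fix y1 y2 assume y: "y1 \<in> ?Y" "y2 \<in> ?Y" and eq: "?g y1 = ?g y2"
    show "y1 = y2"
    proof
      fix e show "y1 e = y2 e"
      proof (cases "e \<in> pairs K")
        case False then show ?thesis using y unfolding Omega_def by auto
      next
        case True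
        have "(z e \<noteq> y1 e) = (z e \<noteq> y2 e)" using eq True by blast
        moreover have "y1 e \<in> {0,1}" "y2 e \<in> {0,1}" "z e \<in> {0,1}"
          using y z True unfolding Omega_def by auto
        ultimately show ?thesis by auto
      qed
    qed
  qed
  have sub: "?g ` ?Y \<subseteq> ?D" by (auto simp: dH_def)
  have finD: "finite ?D" using finite_pairs by simp
  have "card ?Y \<le> card ?D" using card_inj_on_le[OF inj sub finD] .
  then have "real (card ?Y) \<le> (\<Sum>D\<in>?D. 1)" by simp
  also have "\<dots> \<le> (\<Sum>D\<in>?D. 16 powr t * (1/16) ^ card D)"
  proof (rule sum_mono)
    fix D assume D: "D \<in> ?D"
    have e: "16 powr (t - real (card D)) = 16 powr t * (1/16) ^ card D"
      by (simp add: powr_diff powr_realpow power_one_over)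
    have "t - real (card D) \<ge> 0" using D by simp
    then have "1 \<le> 16 powr (t - real (card D))" by (intro ge_one_powr_ge_zero) auto
    then show "1 \<le> 16 powr t * (1/16) ^ card D" using e by simp
  qed
  also have "\<dots> \<le> (\<Sum>D\<in>Pow (pairs K). 16 powr t * (1/16) ^ card D)"
    by (rule sum_mono2) (use finite_pairs in \<open>auto\<close>)
  also have "\<dots> = 16 powr t * (1 + 1/16) ^ card (pairs K)"
    by (simp only: sum_distrib_left[symmetric] sum_pow_card[OF finite_pairs])
  also have "\<dots> = (17/16) ^ (K choose 2) * 16 powr t" by (simp add: card_pairs)
  finally show ?thesis .
qed


lemma Min_ge:
  assumes "\<forall>\<sigma>. \<sigma> permutes {1..K} \<longrightarrow> c \<le> real (dH K (Tperm K \<sigma> w1) w2)"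
  shows "c \<le> real (Min {dH K (Tperm K \<sigma> w1) w2 | \<sigma>. \<sigma> permutes {1..K}})"
proof -
  let ?S = "{dH K (Tperm K \<sigma> w1) w2 | \<sigma>. \<sigma> permutes {1..K}}"
  have eq: "?S = (\<lambda>\<sigma>. dH K (Tperm K \<sigma> w1) w2) ` {\<sigma>. \<sigma> permutes {1..K}}" by blast
  have fin: "finite ?S" unfolding eq by (intro finite_imageI finite_permutations) simp
  have ne: "?S \<noteq> {}" using permutes_id by blast
  have "Min ?S \<in> ?S" using Min_in[OF fin ne] .
  then show ?thesis using assms by auto
qed

definition RR :: "nat \<Rightarrow> real \<Rightarrow> (nat set \<Rightarrow> nat) \<Rightarrow> (nat set \<Rightarrow> nat) \<Rightarrow> bool" where
  "RR K t w1 w2 = (\<exists>\<sigma>. \<sigma> permutes {1..K} \<and> real (dH K (Tperm K \<sigma> w1) w2) < t)"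

lemma nb_bound:
  assumes x: "x \<in> Omega K"
  shows "real (card {y\<in>Omega K. y \<noteq> x \<and> (RR K t x y \<or> RR K t y x)})
    \<le> 2 * fact K * ((17/16) ^ (K choose 2) * 16 powr t)"
proof -
  let ?V = "(17/16) ^ (K choose 2) * 16 powr t :: real"
  let ?\<Pi> = "{\<sigma>. \<sigma> permutes {1..K}}"
  define A where "A \<sigma> = {y\<in>Omega K. real (dH K (Tperm K \<sigma> x) y) < t}" for \<sigma>
  define C where "C \<sigma> = {y\<in>Omega K. real (dH K (Tperm K \<sigma> y) x) < t}" for \<sigma>
  have finP: "finite ?\<Pi>" by (intro finite_permutations) simp
  have cardP: "card ?\<Pi> = fact K" using card_permutations[of "{1..K}" K] by simp
  have sub: "{y\<in>Omega K. y \<noteq> x \<and> (RR K t x y \<or> RR K t y x)} \<subseteq> (\<Union>\<sigma>\<in>?\<Pi>. A \<sigma>) \<union> (\<Union>\<sigma>\<in>?\<Pi>. C \<sigma>)"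
    unfolding RR_def A_def C_def by auto
  have fin2: "finite ((\<Union>\<sigma>\<in>?\<Pi>. A \<sigma>) \<union> (\<Union>\<sigma>\<in>?\<Pi>. C \<sigma>))"
    by (rule finite_subset[OF _ finite_Omega[of K]]) (auto simp: A_def C_def)
  have cA: "real (card (A \<sigma>)) \<le> ?V" if "\<sigma> permutes {1..K}" for \<sigma>
    unfolding A_def by (rule ball_bound[OF Tperm_Omega[OF that x]])
  have cC: "real (card (C \<sigma>)) \<le> ?V" if s: "\<sigma> permutes {1..K}" for \<sigma>
  proof -
    have "inj_on (Tperm K \<sigma>) (C \<sigma>)"
      using Tperm_inj[OF s] by (rule inj_on_subset) (auto simp: C_def)
    moreover have "Tperm K \<sigma> ` C \<sigma> \<subseteq> {z\<in>Omega K. real (dH K x z) < t}"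
      using Tperm_Omega[OF s] dH_sym[of K x "Tperm K \<sigma> _"] unfolding C_def by fastforce
    ultimately have "card (C \<sigma>) \<le> card {z\<in>Omega K. real (dH K x z) < t}"
      by (rule card_inj_on_le) (simp add: finite_Omega)
    then have "real (card (C \<sigma>)) \<le> real (card {z\<in>Omega K. real (dH K x z) < t})" by simp
    also have "\<dots> \<le> ?V" by (rule ball_bound[OF x])
    finally show ?thesis .
  qed
  have "card {y\<in>Omega K. y \<noteq> x \<and> (RR K t x y \<or> RR K t y x)}
      \<le> card ((\<Union>\<sigma>\<in>?\<Pi>. A \<sigma>) \<union> (\<Union>\<sigma>\<in>?\<Pi>. C \<sigma>))" by (rule card_mono[OF fin2 sub])
  also have "\<dots> \<le> card (\<Union>\<sigma>\<in>?\<Pi>. A \<sigma>) + card (\<Union>\<sigma>\<in>?\<Pi>. C \<sigma>)" by (rule card_Un_le)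
  also have "\<dots> \<le> (\<Sum>\<sigma>\<in>?\<Pi>. card (A \<sigma>)) + (\<Sum>\<sigma>\<in>?\<Pi>. card (C \<sigma>))"
    by (intro add_mono card_UN_le finP)
  finally have "real (card {y\<in>Omega K. y \<noteq> x \<and> (RR K t x y \<or> RR K t y x)})
      \<le> (\<Sum>\<sigma>\<in>?\<Pi>. real (card (A \<sigma>))) + (\<Sum>\<sigma>\<in>?\<Pi>. real (card (C \<sigma>)))"
    unfolding of_nat_sum[symmetric] of_nat_add[symmetric] of_nat_le_iff .
  also have "\<dots> \<le> (\<Sum>\<sigma>\<in>?\<Pi>. ?V) + (\<Sum>\<sigma>\<in>?\<Pi>. ?V)"
    by (intro add_mono sum_mono) (use cA cC in auto)
  also have "\<dots> = 2 * fact K * ?V" using cardP by simp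
  finally show ?thesis .
qed


lemma num1: "(17/16::real) ^ m \<le> 2 powr (real m / 8)"
proof -
  have h1: "(2 powr (1/8::real)) ^ 8 = 2 powr (real 8 * (1/8))"
    by (subst powr_realpow[symmetric]) (auto simp: powr_powr mult.commute)
  have h2: "(17/16::real) ^ 8 \<le> 2" by (simp add: power_divide)
  have h3: "(17/16::real) ^ 8 \<le> (2 powr (1/8)) ^ 8" using h1 h2 by simp
  have b: "(17/16::real) \<le> 2 powr (1/8)"
    using h3 by (subst (asm) power_mono_iff) auto
  have "(17/16::real) ^ m = (17/16) powr real m" by (simp add: powr_realpow)
  also have "\<dots> \<le> (2 powr (1/8)) powr real m" by (rule powr_mono2) (use b in auto)
  also have "\<dots> = 2 powr (real m / 8)" by (simp add: powr_powr)
  finally show ?thesis .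
qed

lemma num2: "(16::real) powr (real m / 17) = 2 powr (4 * real m / 17)"
proof -
  have "(16::real) = 2 powr 4" by simp
  then have "(16::real) powr (real m / 17) = (2 powr 4) powr (real m / 17)" by simp
  also have "\<dots> = 2 powr (4 * (real m / 17))" by (rule powr_powr)
  finally show ?thesis by simp
qed

lemma num3: assumes "m \<ge> (8::nat)"
  shows "6 * 2 powr (real m / 8) * ((17/16) ^ m * 16 powr (real m / 17)) \<le> (2::real) ^ m"
proof -
  have "6 * 2 powr (real m / 8) * ((17/16) ^ m * 16 powr (real m / 17))
      \<le> 6 * 2 powr (real m / 8) * (2 powr (real m / 8) * 2 powr (4 * real m / 17))"
    using num1[of m] by (simp add: num2)
  also have "\<dots> = 6 * 2 powr (33 * real m / 68)" by (simp add: powr_add[symmetric])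
  also have "\<dots> \<le> 2 powr (35 * real m / 68) * 2 powr (33 * real m / 68)"
  proof -
    have "(6::real) \<le> 2 powr 4" by simp
    also have "\<dots> \<le> 2 powr (35 * real m / 68)" using assms by (intro powr_mono) auto
    finally show ?thesis by simp
  qed
  also have "\<dots> = 2 powr (real m)" by (simp add: powr_add[symmetric])
  also have "\<dots> = 2 ^ m" by (simp add: powr_realpow)
  finally show ?thesis .
qed


theorem mainTheorem18:
  fixes K :: nat
  assumes "K choose 2 \<ge> 8"
  shows "\<exists>\<Omega>'' \<subseteq> Omega K.
           zeroVec \<in> \<Omega>'' \<and>
           (\<forall>w1\<in>\<Omega>''. \<forall>w2\<in>\<Omega>''. w1 \<noteq> w2 \<longrightarrow>
              real (Min {dH K (Tperm K \<sigma> w1) w2 | \<sigma>. \<sigma> permutes {1..K}})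
                \<ge> real (K choose 2) / 17) \<and>
           real (card \<Omega>'') \<ge> 1 + 2 powr (real (K choose 2) / 8) / fact K"
proof -
  define m where "m = K choose 2"
  have m8: "m \<ge> 8" using assms m_def by simp
  define F :: real where "F = fact K"
  have F1: "F \<ge> 1" unfolding F_def by simp
  define a where "a = (2::real) powr (real m / 8)"
  define t where "t = real m / 17"
  have z0: "zeroVec \<in> Omega K" unfolding Omega_def zeroVec_def by auto
  show ?thesis
  proof (cases "a \<le> F")
    case True
    define full where "full = (\<lambda>e. if e \<in> pairs K then 1 else (0::nat))"
    have fO: "full \<in> Omega K" unfolding Omega_def full_def by auto
    have ne: "pairs K \<noteq> {}"
    proof
      assume "pairs K = {}"
      then have "m = 0" using card_pairs[of K] m_def by simp
      then show False using m8 by simp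
    qed
    have dif: "zeroVec \<noteq> full"
    proof
      assume "zeroVec = full"
      moreover obtain e where "e \<in> pairs K" using ne by auto
      ultimately show False unfolding zeroVec_def full_def by (metis zero_neq_one)
    qed
    have Tz: "Tperm K \<sigma> zeroVec = zeroVec" for \<sigma> unfolding Tperm_def zeroVec_def by auto
    have Tf: "Tperm K \<sigma> full = full" if "\<sigma> permutes {1..K}" for \<sigma>
      unfolding Tperm_def full_def using perm_pairs[OF that] by auto
    have d1: "dH K zeroVec full = m" unfolding dH_def zeroVec_def full_def m_def
      by (simp add: card_pairs)
    have d2: "dH K full zeroVec = m" unfolding dH_def zeroVec_def full_def m_def
      by (simp add: card_pairs)
    have dist: "real (Min {dH K (Tperm K \<sigma> w1) w2 | \<sigma>. \<sigma> permutes {1..K}}) \<ge> real m / 17"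
      if "w1 \<in> {zeroVec, full}" "w2 \<in> {zeroVec, full}" "w1 \<noteq> w2" for w1 w2
    proof (rule Min_ge, intro allI impI)
      fix \<sigma> assume s: "\<sigma> permutes {1..K}"
      have "dH K (Tperm K \<sigma> w1) w2 = m" using that Tz Tf[OF s] d1 d2 by auto
      then show "real m / 17 \<le> real (dH K (Tperm K \<sigma> w1) w2)" by simp
    qed
    have "1 + a / F \<le> 2" using True F1 by simp
    also have "2 = real (card {zeroVec, full})" using dif by simp
    finally show ?thesis using dist z0 fO unfolding m_def a_def F_def
      by (intro exI[of _ "{zeroVec, full}"]) auto
  next
    case False
    define V where "V = (17/16) ^ m * 16 powr t"
    have V1: "V \<ge> 1" unfolding V_def t_def
    proof -
      have "1 \<le> (17/16::real) ^ m" by (rule one_le_power) simp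
      moreover have "1 \<le> (16::real) powr (real m / 17)" by (rule ge_one_powr_ge_zero) auto
      ultimately show "1 \<le> (17/16::real) ^ m * 16 powr (real m / 17)"
        by (metis mult_mono' mult_1 zero_le_one)
    qed
    have nb: "\<And>x. x \<in> Omega K \<Longrightarrow> real (card {y\<in>Omega K. y \<noteq> x \<and> (RR K t x y \<or> RR K t y x)}) \<le> 2 * F * V"
      unfolding F_def V_def m_def by (rule nb_bound)
    obtain S where S: "S \<subseteq> Omega K" "zeroVec \<in> S"
      and ind: "\<forall>x\<in>S. \<forall>y\<in>S. x \<noteq> y \<longrightarrow> \<not> RR K t x y"
      and cS: "real (card (Omega K)) \<le> real (card S) * (2 * F * V + 1)"
      using greedy[OF finite_Omega z0 nb] by blast
    have "(1 + a / F) * (2 * F * V + 1) \<le> (2 * a / F) * (3 * F * V)"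
    proof (rule mult_mono)
      show "1 + a / F \<le> 2 * a / F" using False F1 by (simp add: field_simps)
      have FV: "F * V \<ge> 1" using F1 V1 by (metis mult_mono' mult_1 zero_le_one)
      have "2 * F * V + 1 = 2 * (F * V) + 1" "3 * F * V = 3 * (F * V)" by simp_all
      then show "2 * F * V + 1 \<le> 3 * F * V" using FV by linarith
    qed (use F1 V1 False in auto)
    also have "\<dots> = 6 * a * V" using F1 by (simp add: field_simps)
    also have "\<dots> \<le> 2 ^ m" unfolding a_def V_def t_def by (rule num3[OF m8])
    also have "\<dots> \<le> real (card (Omega K))" using card_Omega[of K] m_def
      by (metis of_nat_le_iff of_nat_numeral of_nat_power)
    also have "\<dots> \<le> real (card S) * (2 * F * V + 1)" by (rule cS)
    finally have fin: "(1 + a / F) * (2 * F * V + 1) \<le> real (card S) * (2 * F * V + 1)" .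
    have pos: "0 < 2 * F * V + 1" using F1 V1 by (simp add: add_pos_nonneg)
    have "1 + a / F \<le> real (card S)" by (rule mult_right_le_imp_le[OF fin pos])
    moreover have "real (Min {dH K (Tperm K \<sigma> w1) w2 | \<sigma>. \<sigma> permutes {1..K}}) \<ge> t"
      if "w1 \<in> S" "w2 \<in> S" "w1 \<noteq> w2" for w1 w2
      using ind that by (intro Min_ge) (auto simp: RR_def not_less)
    ultimately show ?thesis using S unfolding t_def a_def F_def m_def by blast
  qed
qed

end
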